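(* For every $x^*\in J^*$, $$\|x^*\|_*=\sup\{x^*(x):\ x\in J\text{ has NPR hereditarily and }\|x\|_2=1\}.$$
   Context: For a real sequence $x=(x(n))_{n\in\mathbb N}$ let $\|x\|_J=\sup\bigl(\sum_{i=1}^n|\sum_{k\in I_i}x(k)|^2\bigr)^{1/2}$ over all $n$ and all families of pairwise disjoint intervals $I_1,\dots,I_n$ of $\mathbb N$ (intervals: nonempty sets of consecutive positive integers, possibly infinite). $J=\{x:\|x\|_J<\infty\}$; $J^*$ is its dual with norm $\|\cdot\|_*$; $\|\cdot\|_2$ is the $\ell_2$ norm; for $x\in J$ the series $\sum_{n\in I}x(n)$ converge for every interval $I$. For $A\subset\mathbb N$, $x|_A$ equals $x$ on $A$ and $0$ off $A$. A vector $x\in J$ has non-positive remainder (NPR) if $|\sum_n x(n)|^2\le\sum_n|x(n)|^2$; it has NPR hereditarily if $x|_I$ has NPR for every interval $I$ of $\mathbb N$. *)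

theory Defs
  imports "HOL-Analysis.Analysis"
begin

(* The index set \<nat> of the paper (positive integers) is modelled by the type nat
   (0-based); this is only an order-preserving relabelling of indices. *)

definition nat_interval :: "nat set \<Rightarrow> bool" where
  "nat_interval I \<longleftrightarrow> I \<noteq> {} \<and>
     (\<forall>m n k. m \<in> I \<longrightarrow> n \<in> I \<longrightarrow> m \<le> k \<longrightarrow> k \<le> n \<longrightarrow> k \<in> I)"

definition isum :: "(nat \<Rightarrow> real) \<Rightarrow> nat set \<Rightarrow> real" where
  "isum x I = (if finite I then sum x I else (\<Sum>n. x (n + (LEAST k. k \<in> I))))"

definition J_vals :: "(nat \<Rightarrow> real) \<Rightarrow> real set" where
  "J_vals x = {sqrt (\<Sum>I\<in>F. (isum x I)\<^sup>2) | F.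
      finite F \<and> (\<forall>I\<in>F. nat_interval I) \<and> pairwise disjnt F}"

definition J_norm :: "(nat \<Rightarrow> real) \<Rightarrow> real" where
  "J_norm x = Sup (J_vals x)"

definition inJ :: "(nat \<Rightarrow> real) \<Rightarrow> bool" where
  "inJ x \<longleftrightarrow> summable x \<and> bdd_above (J_vals x)"

definition inJdual :: "((nat \<Rightarrow> real) \<Rightarrow> real) \<Rightarrow> bool" where
  "inJdual f \<longleftrightarrow>
     (\<forall>x y a b. inJ x \<longrightarrow> inJ y \<longrightarrow> f (\<lambda>n. a * x n + b * y n) = a * f x + b * f y) \<and>
     (\<exists>C. \<forall>x. inJ x \<longrightarrow> \<bar>f x\<bar> \<le> C * J_norm x)"

definition dual_norm :: "((nat \<Rightarrow> real) \<Rightarrow> real) \<Rightarrow> real" where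
  "dual_norm f = Sup {\<bar>f x\<bar> | x. inJ x \<and> J_norm x \<le> 1}"

definition l2_norm_seq :: "(nat \<Rightarrow> real) \<Rightarrow> real" where
  "l2_norm_seq x = sqrt (\<Sum>n. (x n)\<^sup>2)"

definition restr :: "(nat \<Rightarrow> real) \<Rightarrow> nat set \<Rightarrow> nat \<Rightarrow> real" where
  "restr x A = (\<lambda>n. if n \<in> A then x n else 0)"

definition NPR :: "(nat \<Rightarrow> real) \<Rightarrow> bool" where
  "NPR x \<longleftrightarrow> \<bar>\<Sum>n. x n\<bar>\<^sup>2 \<le> (\<Sum>n. \<bar>x n\<bar>\<^sup>2)"

definition NPR_hered :: "(nat \<Rightarrow> real) \<Rightarrow> bool" where
  "NPR_hered x \<longleftrightarrow> (\<forall>I. nat_interval I \<longrightarrow> NPR (restr x I))"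

end

theory Submission
  imports Defs
begin


lemma nat_interval_ne: "nat_interval I \<Longrightarrow> I \<noteq> {}"
  unfolding nat_interval_def by (rule conjunct1)

lemma nat_interval_conv: "nat_interval I \<Longrightarrow> m \<in> I \<Longrightarrow> n \<in> I \<Longrightarrow> m \<le> k \<Longrightarrow> k \<le> n \<Longrightarrow> k \<in> I"
  unfolding nat_interval_def by blast

lemma nat_interval_inf:
  assumes "nat_interval I" "infinite I"
  shows "I = {(LEAST k. k \<in> I)..}"
proof
  have ne: "I \<noteq> {}" using assms(1) by (rule nat_interval_ne)
  then obtain a where a: "a \<in> I" by auto
  show "I \<subseteq> {(LEAST k. k \<in> I)..}" by (auto intro: Least_le)
  show "{(LEAST k. k \<in> I)..} \<subseteq> I"
  proof
    fix k assume k: "k \<in> {(LEAST k. k \<in> I)..}"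
    have m: "(LEAST k. k \<in> I) \<in> I" using a by (rule LeastI)
    obtain j where j: "j \<in> I" "k \<le> j" using assms(2) unfolding infinite_nat_iff_unbounded_le by blast
    show "k \<in> I" using nat_interval_conv[OF assms(1) m j(1) _ j(2)] k by simp
  qed
qed

lemma nat_interval_fin:
  assumes "nat_interval I" "finite I"
  shows "I = {Min I..Max I}"
proof
  have ne: "I \<noteq> {}" using assms(1) by (rule nat_interval_ne)
  show "I \<subseteq> {Min I..Max I}" using assms(2) by auto
  show "{Min I..Max I} \<subseteq> I"
    using nat_interval_conv[OF assms(1) Min_in[OF assms(2) ne] Max_in[OF assms(2) ne]] by auto
qed

lemma restr_summable_isum:
  assumes "summable x" "nat_interval I"
  shows "summable (restr x I) \<and> isum x I = suminf (restr x I)"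
proof (cases "finite I")
  case True
  have z: "\<And>n. n \<notin> I \<Longrightarrow> restr x I n = 0" by (simp add: restr_def)
  have "suminf (restr x I) = sum (restr x I) I" by (rule suminf_finite[OF True z])
  also have "\<dots> = sum x I" by (simp add: restr_def)
  finally show ?thesis using summable_finite[OF True z] True by (simp add: isum_def)
next
  case False
  define m where "m = (LEAST k. k \<in> I)"
  have I: "I = {m..}" using nat_interval_inf[OF assms(2) False] m_def by simp
  have sh: "(\<lambda>j. restr x I (j + m)) = (\<lambda>j. x (j + m))" by (auto simp: restr_def I)
  have s1: "summable (\<lambda>j. x (j + m))" using assms(1) by (rule summable_ignore_initial_segment)
  hence s2: "summable (restr x I)" using summable_iff_shift[of "restr x I" m] sh by simp
  have "suminf (restr x I) = (\<Sum>j. restr x I (j + m)) + sum (restr x I) {..<m}"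
    by (rule suminf_split_initial_segment[OF s2])
  also have "sum (restr x I) {..<m} = 0" by (auto simp: restr_def I)
  finally have "suminf (restr x I) = (\<Sum>j. x (j + m))" using sh by simp
  then show ?thesis using s2 False by (simp add: isum_def m_def)
qed

lemma isum_finsupp:
  assumes "\<And>k. k \<ge> n \<Longrightarrow> y k = 0" "nat_interval I"
  shows "isum y I = sum y (I \<inter> {..<n})"
proof -
  have sy: "summable y" by (rule summable_finite[of "{..<n}"]) (auto intro: assms(1))
  have z: "\<And>k. k \<notin> I \<inter> {..<n} \<Longrightarrow> restr y I k = 0" using assms(1) by (auto simp: restr_def)
  have "isum y I = suminf (restr y I)" using restr_summable_isum[OF sy assms(2)] by simp
  also have "\<dots> = sum (restr y I) (I \<inter> {..<n})" by (rule suminf_finite[OF _ z]) simp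
  also have "\<dots> = sum y (I \<inter> {..<n})" by (simp add: restr_def)
  finally show ?thesis .
qed

lemma isum_diff:
  assumes "summable x" "summable y" "nat_interval I"
  shows "isum (\<lambda>n. x n - y n) I = isum x I - isum y I"
proof -
  have sd: "summable (\<lambda>n. x n - y n)" using assms by (intro summable_diff)
  have r: "restr (\<lambda>n. x n - y n) I = (\<lambda>n. restr x I n - restr y I n)" by (auto simp: restr_def)
  have a: "isum (\<lambda>n. x n - y n) I = suminf (restr (\<lambda>n. x n - y n) I)"
    using restr_summable_isum[OF sd assms(3)] by simp
  have b: "summable (restr x I)" "isum x I = suminf (restr x I)" using restr_summable_isum[OF assms(1,3)] by auto
  have c: "summable (restr y I)" "isum y I = suminf (restr y I)" using restr_summable_isum[OF assms(2,3)] by auto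
  show ?thesis unfolding a r b(2) c(2) by (rule suminf_diff[OF b(1) c(1), symmetric])
qed

lemma J_vals_ne: "0 \<in> J_vals x"
  unfolding J_vals_def by (rule CollectI, rule exI[of _ "{}"]) simp

lemma J_vals_nonneg: "v \<in> J_vals x \<Longrightarrow> 0 \<le> v"
  unfolding J_vals_def by (auto intro!: sum_nonneg)

lemma J_norm_ge: "inJ x \<Longrightarrow> v \<in> J_vals x \<Longrightarrow> v \<le> J_norm x"
  unfolding J_norm_def inJ_def by (rule cSup_upper) auto

lemma J_norm_nonneg: "inJ x \<Longrightarrow> 0 \<le> J_norm x"
  using J_norm_ge J_vals_ne by blast

lemma J_norm_le: "(\<And>v. v \<in> J_vals x \<Longrightarrow> v \<le> B) \<Longrightarrow> J_norm x \<le> B"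
  unfolding J_norm_def using J_vals_ne by (blast intro: cSup_least)

lemma J_valsI:
  assumes "finite F" "\<forall>I\<in>F. nat_interval I" "pairwise disjnt F"
  shows "sqrt (\<Sum>I\<in>F. (isum x I)\<^sup>2) \<in> J_vals x"
  using assms unfolding J_vals_def by blast

lemma J_fam_le:
  assumes "inJ x" "finite F" "\<forall>I\<in>F. nat_interval I" "pairwise disjnt F"
  shows "(\<Sum>I\<in>F. (isum x I)\<^sup>2) \<le> (J_norm x)\<^sup>2"
proof -
  have "sqrt (\<Sum>I\<in>F. (isum x I)\<^sup>2) \<le> J_norm x" using J_norm_ge[OF assms(1) J_valsI[OF assms(2-4)]] .
  moreover have "0 \<le> (\<Sum>I\<in>F. (isum x I)\<^sup>2)" by (simp add: sum_nonneg)
  ultimately show ?thesis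
    by (metis power_mono real_sqrt_ge_zero real_sqrt_pow2)
qed



lemma nat_interval_atLeastAtMost: "a \<le> b \<Longrightarrow> nat_interval {a..(b::nat)}"
  unfolding nat_interval_def by auto

lemma nat_interval_atLeastLessThan: "a < b \<Longrightarrow> nat_interval {a..<(b::nat)}"
  unfolding nat_interval_def by auto

lemma nat_interval_single: "nat_interval {a::nat}"
  using nat_interval_atLeastAtMost[of a a] by simp

lemma disjoint_singletons: "pairwise disjnt ((\<lambda>j. {j}) ` A)"
  by (auto simp: pairwise_def disjnt_def)

lemma sq_summable:
  assumes "inJ x"
  shows "summable (\<lambda>j. (x j)\<^sup>2) \<and> suminf (\<lambda>j. (x j)\<^sup>2) \<le> (J_norm x)\<^sup>2"
proof -
  have ps: "sum (\<lambda>j. (x j)\<^sup>2) {..<m} \<le> (J_norm x)\<^sup>2" for m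
  proof -
    let ?F = "(\<lambda>j. {j}) ` {..<m}"
    have "(\<Sum>I\<in>?F. (isum x I)\<^sup>2) \<le> (J_norm x)\<^sup>2"
      by (rule J_fam_le[OF assms]) (auto intro: nat_interval_single disjoint_singletons)
    moreover have "(\<Sum>I\<in>?F. (isum x I)\<^sup>2) = sum (\<lambda>j. (x j)\<^sup>2) {..<m}"
      by (subst sum.reindex) (auto simp: inj_on_def isum_def)
    ultimately show ?thesis by simp
  qed
  have s: "summable (\<lambda>j. (x j)\<^sup>2)" by (rule summableI_nonneg_bounded[OF _ ps]) simp
  show ?thesis using s suminf_le_const[OF s ps] by simp
qed

lemma sum_restr_sq_le:
  assumes "finite F" "pairwise disjnt F"
  shows "(\<Sum>I\<in>F. (restr x I n)\<^sup>2) \<le> (x n)\<^sup>2"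
proof (cases "\<exists>I0\<in>F. n \<in> I0")
  case True
  then obtain I0 where I0: "I0 \<in> F" "n \<in> I0" by blast
  have z: "\<forall>I\<in>F - {I0}. (restr x I n)\<^sup>2 = 0"
  proof
    fix I assume I: "I \<in> F - {I0}"
    then have "disjnt I0 I" using assms(2) I0(1) unfolding pairwise_def by blast
    then have "n \<notin> I" using I0(2) by (auto simp: disjnt_def)
    then show "(restr x I n)\<^sup>2 = 0" by (simp add: restr_def)
  qed
  have "(\<Sum>I\<in>F. (restr x I n)\<^sup>2) = (restr x I0 n)\<^sup>2 + (\<Sum>I\<in>F - {I0}. (restr x I n)\<^sup>2)"
    by (rule sum.remove[OF assms(1) I0(1)])
  also have "(\<Sum>I\<in>F - {I0}. (restr x I n)\<^sup>2) = 0" using z by simp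
  finally show ?thesis using I0 by (simp add: restr_def)
next
  case False
  then have "(\<Sum>I\<in>F. (restr x I n)\<^sup>2) = 0" by (auto simp: restr_def intro!: sum.neutral)
  then show ?thesis by simp
qed

lemma J_le_l2:
  assumes "inJ x" "NPR_hered x"
  shows "J_norm x \<le> l2_norm_seq x"
proof (rule J_norm_le)
  fix v assume "v \<in> J_vals x"
  then obtain F where v: "v = sqrt (\<Sum>I\<in>F. (isum x I)\<^sup>2)" and F: "finite F" "\<forall>I\<in>F. nat_interval I" "pairwise disjnt F"
    unfolding J_vals_def by blast
  have sx: "summable x" using assms(1) unfolding inJ_def by simp
  have s2: "summable (\<lambda>j. (x j)\<^sup>2)" using sq_summable[OF assms(1)] by simp
  have sr: "summable (\<lambda>n. (restr x I n)\<^sup>2)" for I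
    by (rule summable_comparison_test[OF _ s2]) (auto simp: restr_def)
  have each: "(isum x I)\<^sup>2 \<le> (\<Sum>n. (restr x I n)\<^sup>2)" if I: "I \<in> F" for I
  proof -
    have ni: "nat_interval I" using F(2) I by blast
    have "NPR (restr x I)" using assms(2) ni unfolding NPR_hered_def by blast
    then have "\<bar>suminf (restr x I)\<bar>\<^sup>2 \<le> (\<Sum>n. \<bar>restr x I n\<bar>\<^sup>2)" unfolding NPR_def by simp
    moreover have "isum x I = suminf (restr x I)" using restr_summable_isum[OF sx ni] by simp
    ultimately show ?thesis by simp
  qed
  have "(\<Sum>I\<in>F. (isum x I)\<^sup>2) \<le> (\<Sum>I\<in>F. \<Sum>n. (restr x I n)\<^sup>2)"
    by (rule sum_mono) (rule each)
  also have "\<dots> = (\<Sum>n. \<Sum>I\<in>F. (restr x I n)\<^sup>2)"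
    by (rule suminf_sum[symmetric]) (rule sr)
  also have "\<dots> \<le> (\<Sum>n. (x n)\<^sup>2)"
  proof (rule suminf_le)
    show "\<And>n. (\<Sum>I\<in>F. (restr x I n)\<^sup>2) \<le> (x n)\<^sup>2" by (rule sum_restr_sq_le[OF F(1,3)])
    show "summable (\<lambda>n. \<Sum>I\<in>F. (restr x I n)\<^sup>2)" by (rule summable_sum) (rule sr)
    show "summable (\<lambda>n. (x n)\<^sup>2)" by (rule s2)
  qed
  finally show "v \<le> l2_norm_seq x" unfolding v l2_norm_seq_def by simp
qed

lemma sum_sq_le_sq_sum:
  fixes a :: "'a \<Rightarrow> real"
  assumes "finite F" "\<And>i. i \<in> F \<Longrightarrow> 0 \<le> a i"
  shows "(\<Sum>i\<in>F. (a i)\<^sup>2) \<le> (\<Sum>i\<in>F. a i)\<^sup>2"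
  using assms
proof (induction F rule: finite_induct)
  case empty then show ?case by simp
next
  case (insert i F)
  have "0 \<le> (\<Sum>j\<in>F. a j)" using insert by (auto intro: sum_nonneg)
  moreover have "0 \<le> a i" using insert by auto
  ultimately have "(a i)\<^sup>2 + (\<Sum>j\<in>F. a j)\<^sup>2 \<le> (a i + (\<Sum>j\<in>F. a j))\<^sup>2"
    by (simp add: power2_eq_square algebra_simps)
  then show ?case using insert by auto
qed

lemma inJ_finsupp:
  assumes "\<And>k. k \<ge> n \<Longrightarrow> y k = 0"
  shows "inJ y"
proof -
  have sy: "summable y" by (rule summable_finite[of "{..<n}"]) (auto intro: assms)
  let ?Y = "(\<Sum>k<n. \<bar>y k\<bar>)"
  have "v \<le> ?Y" if "v \<in> J_vals y" for v
  proof -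
    from that obtain F where v: "v = sqrt (\<Sum>I\<in>F. (isum y I)\<^sup>2)" and F: "finite F" "\<forall>I\<in>F. nat_interval I" "pairwise disjnt F"
      unfolding J_vals_def by blast
    define a where "a I = (\<Sum>k\<in>I \<inter> {..<n}. \<bar>y k\<bar>)" for I
    have a0: "0 \<le> a I" for I unfolding a_def by (auto intro: sum_nonneg)
    have ia: "\<bar>isum y I\<bar> \<le> a I" if "I \<in> F" for I
      using isum_finsupp[OF assms, where I=I] F(2) that unfolding a_def by (simp add: sum_abs)
    have "(\<Sum>I\<in>F. a I) = sum (\<lambda>k. \<bar>y k\<bar>) (\<Union>I\<in>F. I \<inter> {..<n})"
      unfolding a_def
    proof (rule sum.UNION_disjoint[symmetric])
      show "finite F" by fact
      show "\<forall>i\<in>F. finite (i \<inter> {..<n})" by auto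
      show "\<forall>i\<in>F. \<forall>j\<in>F. i \<noteq> j \<longrightarrow> i \<inter> {..<n} \<inter> (j \<inter> {..<n}) = {}"
        using F(3) unfolding pairwise_def disjnt_def by blast
    qed
    also have "\<dots> \<le> ?Y" by (rule sum_mono2) auto
    finally have sa: "(\<Sum>I\<in>F. a I) \<le> ?Y" .
    have "(\<Sum>I\<in>F. (isum y I)\<^sup>2) \<le> (\<Sum>I\<in>F. (a I)\<^sup>2)"
    proof (rule sum_mono)
      fix I assume "I \<in> F"
      then have "\<bar>isum y I\<bar> \<le> a I" by (rule ia)
      then show "(isum y I)\<^sup>2 \<le> (a I)\<^sup>2"
        by (metis abs_ge_zero power2_abs power_mono)
    qed
    also have "\<dots> \<le> (\<Sum>I\<in>F. a I)\<^sup>2" by (rule sum_sq_le_sq_sum[OF F(1) a0])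
    also have "\<dots> \<le> ?Y\<^sup>2" using sa by (simp add: a0 power_mono sum_nonneg)
    finally have "(\<Sum>I\<in>F. (isum y I)\<^sup>2) \<le> ?Y\<^sup>2" .
    then have "sqrt (\<Sum>I\<in>F. (isum y I)\<^sup>2) \<le> sqrt (?Y\<^sup>2)" by (rule real_sqrt_le_mono)
    also have "\<dots> = ?Y" by (simp add: sum_nonneg)
    finally show ?thesis using v by simp
  qed
  then show ?thesis unfolding inJ_def using sy by (auto simp: bdd_above_def)
qed

lemma inJ_diff:
  assumes "inJ x" "inJ y"
  shows "inJ (\<lambda>n. x n - y n) \<and> J_norm (\<lambda>n. x n - y n) \<le> J_norm x + J_norm y"
proof -
  have sx: "summable x" and sy: "summable y" using assms unfolding inJ_def by auto
  have b: "v \<le> J_norm x + J_norm y" if "v \<in> J_vals (\<lambda>n. x n - y n)" for v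
  proof -
    from that obtain F where v: "v = sqrt (\<Sum>I\<in>F. (isum (\<lambda>n. x n - y n) I)\<^sup>2)" and F: "finite F" "\<forall>I\<in>F. nat_interval I" "pairwise disjnt F"
      unfolding J_vals_def by blast
    have "v = L2_set (\<lambda>I. isum x I + (- isum y I)) F"
      unfolding v L2_set_def using isum_diff[OF sx sy] F(2) by (intro arg_cong[where f=sqrt] sum.cong) auto
    also have "\<dots> \<le> L2_set (isum x) F + L2_set (\<lambda>I. - isum y I) F" by (rule L2_set_triangle_ineq)
    also have "L2_set (isum x) F \<le> J_norm x"
      unfolding L2_set_def by (rule J_norm_ge[OF assms(1) J_valsI[OF F]])
    also have "L2_set (\<lambda>I. - isum y I) F \<le> J_norm y"
      unfolding L2_set_def using J_norm_ge[OF assms(2) J_valsI[OF F]] by simp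
    finally show ?thesis by simp
  qed
  have "inJ (\<lambda>n. x n - y n)" unfolding inJ_def using summable_diff[OF sx sy] b by (auto simp: bdd_above_def)
  moreover have "J_norm (\<lambda>n. x n - y n) \<le> J_norm x + J_norm y" by (rule J_norm_le) (rule b)
  ultimately show ?thesis by simp
qed



lemma nat_interval_atLeast: "nat_interval {a::nat..}"
  unfolding nat_interval_def by auto

lemma nat_interval_Int_ivl:
  assumes "nat_interval I" "I \<inter> {a..<b} \<noteq> {}"
  shows "nat_interval (I \<inter> {a..<(b::nat)})"
  unfolding nat_interval_def[of "I \<inter> {a..<b}"] using nat_interval_conv[OF assms(1)] assms(2) by auto

lemma tail_extract:
  assumes x: "inJ x" and e: "0 < e" and JN: "e \<le> J_norm (restr x {N..})"
  shows "\<exists>M>N. \<exists>G. finite G \<and> (\<forall>I\<in>G. nat_interval I \<and> I \<subseteq> {N..<M}) \<and> pairwise disjnt G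
           \<and> e\<^sup>2 / 4 \<le> (\<Sum>I\<in>G. (isum x I)\<^sup>2)"
proof -
  define r where "r = restr x {N..}"
  have sx: "summable x" using x unfolding inJ_def by simp
  have sr: "summable r" using restr_summable_isum[OF sx nat_interval_atLeast] unfolding r_def by simp
  have "\<not> (\<forall>v\<in>J_vals r. v \<le> e / 2)"
  proof
    assume "\<forall>v\<in>J_vals r. v \<le> e / 2"
    then have "J_norm r \<le> e / 2" by (intro J_norm_le) auto
    then show False using JN e unfolding r_def by simp
  qed
  then obtain v where v: "v \<in> J_vals r" "e / 2 < v" by auto
  then obtain F where vF: "v = sqrt (\<Sum>I\<in>F. (isum r I)\<^sup>2)" and F: "finite F" "\<forall>I\<in>F. nat_interval I" "pairwise disjnt F"
    unfolding J_vals_def by blast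
  have "(e/2)\<^sup>2 < (\<Sum>I\<in>F. (isum r I)\<^sup>2)"
  proof -
    have "(e/2)\<^sup>2 < v\<^sup>2" using v(2) e by (intro power_strict_mono) auto
    also have "v\<^sup>2 = (\<Sum>I\<in>F. (isum r I)\<^sup>2)" unfolding vF by (simp add: sum_nonneg)
    finally show ?thesis .
  qed
  then have lt: "e\<^sup>2 / 4 < (\<Sum>I\<in>F. (isum r I)\<^sup>2)" by (simp add: power_divide)
  have lim: "(\<lambda>M. \<Sum>I\<in>F. (sum (restr r I) {..<M})\<^sup>2) \<longlonglongrightarrow> (\<Sum>I\<in>F. (isum r I)\<^sup>2)"
  proof (intro tendsto_intros)
    fix I assume I: "I \<in> F"
    have "summable (restr r I)" "isum r I = suminf (restr r I)"
      using restr_summable_isum[OF sr] F(2) I by auto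
    then show "(\<lambda>M. sum (restr r I) {..<M}) \<longlonglongrightarrow> isum r I" by (simp add: summable_LIMSEQ)
  qed
  have "eventually (\<lambda>M. e\<^sup>2 / 4 < (\<Sum>I\<in>F. (sum (restr r I) {..<M})\<^sup>2)) sequentially"
    by (rule order_tendstoD(1)[OF lim lt])
  moreover have "eventually (\<lambda>M. Suc N \<le> M) sequentially" by (rule eventually_ge_at_top)
  ultimately have "eventually (\<lambda>M. Suc N \<le> M \<and> e\<^sup>2 / 4 < (\<Sum>I\<in>F. (sum (restr r I) {..<M})\<^sup>2)) sequentially"
    by (rule eventually_conj[rotated])
  then obtain M where M: "N < M" "e\<^sup>2 / 4 < (\<Sum>I\<in>F. (sum (restr r I) {..<M})\<^sup>2)"
    unfolding eventually_sequentially by (meson Suc_le_eq order_refl)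
  define W where "W = {N..<M}"
  have rs: "sum (restr r I) {..<M} = sum x (I \<inter> W)" for I
  proof -
    have "sum (restr r I) {..<M} = sum (\<lambda>k. if k \<in> I \<inter> {N..} then x k else 0) {..<M}"
      by (rule sum.cong) (auto simp: r_def restr_def)
    also have "\<dots> = sum x ({..<M} \<inter> (I \<inter> {N..}))" by (rule sum.inter_restrict[symmetric]) simp
    also have "{..<M} \<inter> (I \<inter> {N..}) = I \<inter> W" unfolding W_def by auto
    finally show ?thesis .
  qed
  define F' where "F' = {I\<in>F. I \<inter> W \<noteq> {}}"
  define G where "G = (\<lambda>I. I \<inter> W) ` F'"
  have fF': "finite F'" using F(1) unfolding F'_def by simp
  have inj: "inj_on (\<lambda>I. I \<inter> W) F'"
  proof (rule inj_onI)
    fix I I' assume I: "I \<in> F'" "I' \<in> F'" "I \<inter> W = I' \<inter> W"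
    show "I = I'"
    proof (rule ccontr)
      assume "I \<noteq> I'"
      then have "disjnt I I'" using F(3) I(1,2) unfolding pairwise_def F'_def by blast
      then show False using I unfolding F'_def disjnt_def by blast
    qed
  qed
  have "(\<Sum>I\<in>F. (sum (restr r I) {..<M})\<^sup>2) = (\<Sum>I\<in>F. (sum x (I \<inter> W))\<^sup>2)" using rs by simp
  also have "\<dots> = (\<Sum>I\<in>F'. (sum x (I \<inter> W))\<^sup>2)"
    by (rule sum.mono_neutral_right[OF F(1)]) (auto simp: F'_def)
  also have "\<dots> = (\<Sum>J\<in>G. (sum x J)\<^sup>2)" unfolding G_def by (simp add: sum.reindex[OF inj])
  also have "\<dots> = (\<Sum>J\<in>G. (isum x J)\<^sup>2)"
    by (rule sum.cong) (auto simp: G_def W_def isum_def)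
  finally have sG: "e\<^sup>2 / 4 \<le> (\<Sum>J\<in>G. (isum x J)\<^sup>2)" using M(2) by simp
  have "finite G" unfolding G_def using fF' by simp
  moreover have "\<forall>J\<in>G. nat_interval J \<and> J \<subseteq> {N..<M}"
    unfolding G_def F'_def W_def using F(2) by (auto intro: nat_interval_Int_ivl)
  moreover have "pairwise disjnt G"
  proof (rule pairwiseI)
    fix J1 J2 assume J: "J1 \<in> G" "J2 \<in> G" "J1 \<noteq> J2"
    then obtain I1 I2 where I: "I1 \<in> F" "I2 \<in> F" "J1 = I1 \<inter> W" "J2 = I2 \<inter> W"
      unfolding G_def F'_def by blast
    then have "I1 \<noteq> I2" using J(3) by blast
    then have "disjnt I1 I2" using F(3) I(1,2) unfolding pairwise_def by blast
    then show "disjnt J1 J2" using I(3,4) unfolding disjnt_def by blast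
  qed
  ultimately show ?thesis using M(1) sG by blast
qed

lemma tail_small:
  assumes x: "inJ x" and e: "0 < e"
  shows "\<exists>N\<ge>N0. J_norm (restr x {N..}) < e"
proof (rule ccontr)
  assume "\<not> ?thesis"
  then have big: "\<And>N. N \<ge> N0 \<Longrightarrow> e \<le> J_norm (restr x {N..})" by (meson not_le)
  have acc: "\<exists>M\<ge>N0. \<exists>G. finite G \<and> (\<forall>I\<in>G. nat_interval I \<and> I \<subseteq> {..<M}) \<and> pairwise disjnt G
           \<and> real k * (e\<^sup>2 / 4) \<le> (\<Sum>I\<in>G. (isum x I)\<^sup>2)" for k
  proof (induction k)
    case 0
    show ?case by (rule exI[of _ N0], simp, rule exI[of _ "{}"]) simp
  next
    case (Suc k)
    then obtain M G where MG: "M \<ge> N0" "finite G" "\<forall>I\<in>G. nat_interval I \<and> I \<subseteq> {..<M}" "pairwise disjnt G"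
      "real k * (e\<^sup>2 / 4) \<le> (\<Sum>I\<in>G. (isum x I)\<^sup>2)" by blast
    obtain M' G' where MG': "M' > M" "finite G'" "\<forall>I\<in>G'. nat_interval I \<and> I \<subseteq> {M..<M'}" "pairwise disjnt G'"
      "e\<^sup>2 / 4 \<le> (\<Sum>I\<in>G'. (isum x I)\<^sup>2)"
      using tail_extract[OF x e big[OF MG(1)]] by blast
    have dj: "G \<inter> G' = {}"
    proof (rule ccontr)
      assume "G \<inter> G' \<noteq> {}"
      then obtain I where I: "I \<in> G" "I \<in> G'" by blast
      then have "I \<noteq> {}" using MG(3) nat_interval_ne by blast
      moreover have "I \<subseteq> {..<M}" "I \<subseteq> {M..<M'}" using I MG(3) MG'(3) by auto
      ultimately show False by fastforce
    qed
    have "(\<Sum>I\<in>G \<union> G'. (isum x I)\<^sup>2) = (\<Sum>I\<in>G. (isum x I)\<^sup>2) + (\<Sum>I\<in>G'. (isum x I)\<^sup>2)"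
      by (rule sum.union_disjoint[OF MG(2) MG'(2) dj])
    then have "real (Suc k) * (e\<^sup>2 / 4) \<le> (\<Sum>I\<in>G \<union> G'. (isum x I)\<^sup>2)"
      using MG(5) MG'(5) by (simp add: algebra_simps)
    moreover have "finite (G \<union> G')" using MG(2) MG'(2) by simp
    moreover have "\<forall>I\<in>G \<union> G'. nat_interval I \<and> I \<subseteq> {..<M'}" using MG(3) MG'(3) MG'(1) by fastforce
    moreover have "pairwise disjnt (G \<union> G')"
    proof (rule pairwiseI)
      fix A B assume AB: "A \<in> G \<union> G'" "B \<in> G \<union> G'" "A \<noteq> B"
      show "disjnt A B"
      proof (cases "A \<in> G")
        case True
        show ?thesis
        proof (cases "B \<in> G")
          case True
          then show ?thesis using \<open>A \<in> G\<close> AB(3) MG(4) unfolding pairwise_def by blast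
        next
          case False
          then have "B \<subseteq> {M..<M'}" using AB(2) MG'(3) by auto
          moreover have "A \<subseteq> {..<M}" using True MG(3) by auto
          ultimately show ?thesis by (force simp: disjnt_def subset_iff)
        qed
      next
        case False
        then have A: "A \<in> G'" "A \<subseteq> {M..<M'}" using AB(1) MG'(3) by auto
        show ?thesis
        proof (cases "B \<in> G")
          case True
          then have "B \<subseteq> {..<M}" using MG(3) by auto
          then show ?thesis using A by (force simp: disjnt_def subset_iff)
        next
          case False
          then have "B \<in> G'" using AB(2) by auto
          then show ?thesis using A(1) AB(3) MG'(4) unfolding pairwise_def by blast
        qed
      qed
    qed
    ultimately show ?case using MG(1) MG'(1) by (intro exI[of _ M']) auto
  qed
  have e4: "0 < e\<^sup>2 / 4" using e by simp
  obtain k where k: "(J_norm x)\<^sup>2 / (e\<^sup>2 / 4) < real k" using reals_Archimedean2 by blast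
  obtain M G where MG: "finite G" "\<forall>I\<in>G. nat_interval I \<and> I \<subseteq> {..<M}" "pairwise disjnt G"
      "real k * (e\<^sup>2 / 4) \<le> (\<Sum>I\<in>G. (isum x I)\<^sup>2)" using acc[of k] by blast
  have "(\<Sum>I\<in>G. (isum x I)\<^sup>2) \<le> (J_norm x)\<^sup>2" using MG(2) by (intro J_fam_le[OF x MG(1) _ MG(3)]) auto
  then have "real k * (e\<^sup>2 / 4) \<le> (J_norm x)\<^sup>2" using MG(4) by simp
  then have "real k \<le> (J_norm x)\<^sup>2 / (e\<^sup>2 / 4)" using e4 by (simp add: le_divide_eq)
  then show False using k by simp
qed



fun phi :: "(nat \<Rightarrow> real) \<Rightarrow> nat list \<Rightarrow> real" where
  "phi s (a # b # r) = (s b - s a)\<^sup>2 + phi s (b # r)"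
| "phi s _ = 0"

definition paths :: "nat \<Rightarrow> nat list set" where
  "paths n = {xs. sorted_wrt (<) xs \<and> xs \<noteq> [] \<and> hd xs = 0 \<and> last xs = n}"

lemma phi_append:
  "xs \<noteq> [] \<Longrightarrow> phi s (xs @ b # ys) = phi s xs + (s b - s (last xs))\<^sup>2 + phi s (b # ys)"
proof (induction xs)
  case Nil then show ?case by simp
next
  case (Cons a xs)
  show ?case
  proof (cases xs)
    case Nil then show ?thesis by simp
  next
    case (Cons c r)
    then show ?thesis using Cons.IH by simp
  qed
qed

lemma phi_cong: "(\<And>j. j \<in> set xs \<Longrightarrow> s j = s' j) \<Longrightarrow> phi s xs = phi s' xs"
  by (induction s xs rule: phi.induct) auto

lemma phi_nonneg: "0 \<le> phi s xs"
  by (induction s xs rule: phi.induct) auto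

lemma phi_upt: "a \<le> b \<Longrightarrow> phi s [a..<Suc b] = (\<Sum>k\<in>{a..<b}. (s (Suc k) - s k)\<^sup>2)"
proof (induction b)
  case 0 then show ?case by simp
next
  case (Suc b)
  show ?case
  proof (cases "a = Suc b")
    case True then show ?thesis by simp
  next
    case False
    then have ab: "a \<le> b" using Suc.prems by simp
    have "[a..<Suc (Suc b)] = [a..<Suc b] @ [Suc b]" using ab by (simp del: upt_Suc add: upt_Suc_append)
    then have "phi s [a..<Suc (Suc b)] = phi s [a..<Suc b] + (s (Suc b) - s b)\<^sup>2"
      using phi_append[of "[a..<Suc b]" s "Suc b" "[]"] ab by simp
    also have "\<dots> = (\<Sum>k\<in>{a..<Suc b}. (s (Suc k) - s k)\<^sup>2)" using Suc.IH[OF ab] ab by (simp add: le_SucI)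
    finally show ?thesis .
  qed
qed

lemma sorted_le_last: "sorted_wrt (<) xs \<Longrightarrow> x \<in> set xs \<Longrightarrow> x \<le> (last xs :: nat)"
proof (induction xs)
  case Nil then show ?case by simp
next
  case (Cons a xs)
  show ?case
  proof (cases "xs = []")
    case True then show ?thesis using Cons by simp
  next
    case False
    then have "last xs \<in> set xs" by simp
    then show ?thesis using Cons False by (auto intro: less_imp_le)
  qed
qed

lemma sorted_hd_le: "sorted_wrt (<) xs \<Longrightarrow> x \<in> set xs \<Longrightarrow> hd xs \<le> (x :: nat)"
  by (cases xs) auto

lemma paths_append:
  assumes "sorted_wrt (<) xs" "xs \<noteq> []" "hd xs = 0" "sorted_wrt (<) ys" "ys \<noteq> []" "last ys = n"
    "last xs < hd ys"
  shows "xs @ ys \<in> paths n"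
proof -
  have "\<forall>x\<in>set xs. \<forall>y\<in>set ys. x < y"
    using sorted_le_last[OF assms(1)] sorted_hd_le[OF assms(4)] assms(7) by (meson le_less_trans less_le_trans)
  then show ?thesis using assms unfolding paths_def by (auto simp: sorted_wrt_append)
qed

lemma sorted_cons2: "sorted_wrt (<) ys \<Longrightarrow> ys \<noteq> [] \<Longrightarrow> a < hd ys \<Longrightarrow> sorted_wrt (<) (a # (ys::nat list))"
  using sorted_hd_le by fastforce

lemma upt_paths: "[0..<Suc n] \<in> paths n"
proof -
  have "sorted_wrt (<) [0..<Suc n]" by (rule sorted_wrt_upt)
  moreover have "hd [0..<Suc n] = 0" by (simp add: hd_upt del: upt_Suc)
  moreover have "last [0..<Suc n] = n" by simp
  ultimately show ?thesis unfolding paths_def by simp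
qed

lemma finite_paths: "finite (paths n)"
proof -
  have "paths n \<subseteq> {xs. set xs \<subseteq> {..n} \<and> length xs \<le> Suc n}"
  proof
    fix xs assume xs: "xs \<in> paths n"
    then have s: "sorted_wrt (<) xs" "last xs = n" unfolding paths_def by auto
    then have "set xs \<subseteq> {..n}" using sorted_le_last by auto
    moreover have "distinct xs" using s(1) by (simp add: strict_sorted_iff)
    then have "length xs = card (set xs)" by (simp add: distinct_card)
    moreover have "card (set xs) \<le> card {..n}" using \<open>set xs \<subseteq> {..n}\<close> by (intro card_mono) auto
    ultimately show "xs \<in> {xs. set xs \<subseteq> {..n} \<and> length xs \<le> Suc n}" by simp
  qed
  moreover have "finite {xs. set xs \<subseteq> {..n} \<and> length xs \<le> Suc n}" by (rule finite_lists_length_le) simp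
  ultimately show ?thesis by (rule finite_subset)
qed

lemma four_point:
  fixes P T T' X :: real
  assumes "(T - P)\<^sup>2 + (T' - T)\<^sup>2 \<le> (T' - P)\<^sup>2" "(T' - T)\<^sup>2 + (X - T')\<^sup>2 \<le> (X - T)\<^sup>2" "T' \<noteq> T"
  shows "(X - T)\<^sup>2 + (T' - P)\<^sup>2 \<le> (T' - T)\<^sup>2 + (X - P)\<^sup>2"
proof -
  have h1: "0 \<le> (T - P) * (T' - T)" using assms(1) by (simp add: power2_eq_square algebra_simps)
  have h2: "0 \<le> (T' - T) * (X - T')" using assms(2) by (simp add: power2_eq_square algebra_simps)
  have "0 \<le> (T - P) * (X - T')"
  proof (cases "T' > T")
    case True
    then have "0 \<le> T - P" "0 \<le> X - T'" using h1 h2 by (auto simp: zero_le_mult_iff)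
    then show ?thesis by simp
  next
    case False
    then have "T' < T" using assms(3) by simp
    then have "T - P \<le> 0" "X - T' \<le> 0" using h1 h2 by (auto simp: zero_le_mult_iff)
    then show ?thesis by (simp add: mult_nonpos_nonpos)
  qed
  then show ?thesis by (simp add: power2_eq_square algebra_simps)
qed



lemma union_step:
  assumes Mle: "\<forall>B\<in>paths n. phi s B \<le> M"
    and cover: "\<And>k. 0 < k \<Longrightarrow> k < n \<Longrightarrow> \<exists>B\<in>paths n. phi s B = M \<and> k \<in> set B"
    and C: "C \<in> paths n" "phi s C = M" "C = [0..<Suc t] @ ys" and tn: "Suc t \<le> n"
  shows "\<exists>C'\<in>paths n. phi s C' = M \<and> (\<exists>ys'. C' = [0..<Suc (Suc t)] @ ys')"
proof -
  let ?g = "\<lambda>a b. (s b - s a)\<^sup>2"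
  have Cs: "sorted_wrt (<) C" "last C = n" using C(1) unfolding paths_def by auto
  have ysne: "ys \<noteq> []"
  proof
    assume "ys = []"
    then have "last C = t" using C(3) by simp
    then show False using Cs tn by simp
  qed
  then obtain s0 rest where ys: "ys = s0 # rest" by (cases ys) auto
  have srt: "sorted_wrt (<) (s0 # rest)" using Cs(1) C(3) ys by (simp add: sorted_wrt_append)
  have ts0: "t < s0" using Cs(1) C(3) ys by (simp add: sorted_wrt_append)
  have lastr: "last (s0 # rest) = n" using Cs(2) C(3) ys by simp
  have s0n: "s0 \<le> n" using sorted_le_last[OF srt, of s0] lastr by simp
  have pre: "sorted_wrt (<) [0..<Suc t]" "[0..<Suc t] \<noteq> []" "hd [0..<Suc t] = 0" "last [0..<Suc t] = t"
    by (auto simp: sorted_wrt_upt hd_upt simp del: upt_Suc)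
  have phiC: "phi s C = phi s [0..<Suc t] + ?g t s0 + phi s (s0 # rest)"
    using C(3) ys phi_append[OF pre(2)] pre(4) by simp
  show ?thesis
  proof (cases "s0 = Suc t")
    case True
    have "C = [0..<Suc (Suc t)] @ rest" using C(3) ys True by simp
    then show ?thesis using C(1,2) by blast
  next
    case False
    then have st: "Suc t < s0" using ts0 by simp
    then have "Suc t < n" using s0n by simp
    then obtain B where B: "B \<in> paths n" "phi s B = M" "Suc t \<in> set B" using cover[of "Suc t"] by auto
    then obtain bs bs2 where Bsp: "B = bs @ Suc t # bs2" by (meson split_list)
    have Bs: "sorted_wrt (<) B" "hd B = 0" "last B = n" using B(1) unfolding paths_def by auto
    have bsne: "bs \<noteq> []" using Bs(2) Bsp by (cases bs) auto
    have bss: "sorted_wrt (<) bs" "hd bs = 0" using Bs Bsp bsne by (auto simp: sorted_wrt_append)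
    have srt2: "sorted_wrt (<) (Suc t # bs2)" using Bs(1) Bsp by (simp add: sorted_wrt_append)
    have last2: "last (Suc t # bs2) = n" using Bs(3) Bsp by simp
    define p where "p = last bs"
    have pt: "p < Suc t" using Bs(1) Bsp bsne unfolding p_def by (simp add: sorted_wrt_append)
    have phiB: "phi s B = phi s bs + ?g p (Suc t) + phi s (Suc t # bs2)"
      using Bsp phi_append[OF bsne] p_def by simp
    define C' where "C' = [0..<Suc t] @ Suc t # bs2"
    have C'p: "C' \<in> paths n" unfolding C'_def by (rule paths_append[OF pre(1-3) srt2 _ last2]) (auto simp: pre(4))
    have C'eq: "C' = [0..<Suc (Suc t)] @ bs2" unfolding C'_def by simp
    have phiC': "phi s C' = phi s [0..<Suc t] + ?g t (Suc t) + phi s (Suc t # bs2)"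
      unfolding C'_def using phi_append[OF pre(2)] pre(4) by simp
    have "M \<le> phi s C'"
    proof (cases "p = t")
      case True
      define E where "E = bs @ s0 # rest"
      have "E \<in> paths n" unfolding E_def
        by (rule paths_append[OF bss(1) bsne bss(2) srt _ lastr]) (use True ts0 p_def in auto)
      then have "phi s E \<le> M" using Mle by blast
      moreover have "phi s E = phi s bs + ?g p s0 + phi s (s0 # rest)"
        unfolding E_def using phi_append[OF bsne] p_def by simp
      ultimately show ?thesis using phiC phiC' phiB C(2) B(2) True by simp
    next
      case False
      then have ptt: "p < t" using pt by simp
      show ?thesis
      proof (cases "s (Suc t) = s t")
        case True
        define E where "E = bs @ t # s0 # rest"
        have srtE: "sorted_wrt (<) (t # s0 # rest)" by (rule sorted_cons2[OF srt]) (use ts0 in auto)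
        have "E \<in> paths n" unfolding E_def
          by (rule paths_append[OF bss(1) bsne bss(2) srtE]) (use lastr ptt p_def in auto)
        then have "phi s E \<le> M" using Mle by blast
        moreover have "phi s E = phi s bs + ?g p t + ?g t s0 + phi s (s0 # rest)"
          unfolding E_def using phi_append[OF bsne] p_def by simp
        ultimately show ?thesis using phiC phiC' phiB C(2) B(2) True by simp
      next
        case False
        define B2 where "B2 = bs @ t # Suc t # bs2"
        have srtB2: "sorted_wrt (<) (t # Suc t # bs2)" by (rule sorted_cons2[OF srt2]) auto
        have "B2 \<in> paths n" unfolding B2_def
          by (rule paths_append[OF bss(1) bsne bss(2) srtB2]) (use last2 ptt p_def in auto)
        then have "phi s B2 \<le> M" using Mle by blast
        moreover have "phi s B2 = phi s bs + ?g p t + ?g t (Suc t) + phi s (Suc t # bs2)"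
          unfolding B2_def using phi_append[OF bsne] p_def by simp
        ultimately have i1: "?g p t + ?g t (Suc t) \<le> ?g p (Suc t)" using phiB B(2) by simp
        define C2 where "C2 = [0..<Suc t] @ Suc t # s0 # rest"
        have srtC2: "sorted_wrt (<) (Suc t # s0 # rest)" by (rule sorted_cons2[OF srt]) (use st in auto)
        have "C2 \<in> paths n" unfolding C2_def
          by (rule paths_append[OF pre(1-3) srtC2]) (use lastr pre(4) in auto)
        then have "phi s C2 \<le> M" using Mle by blast
        moreover have "phi s C2 = phi s [0..<Suc t] + ?g t (Suc t) + ?g (Suc t) s0 + phi s (s0 # rest)"
          unfolding C2_def using phi_append[OF pre(2)] pre(4) by simp
        ultimately have i2: "?g t (Suc t) + ?g (Suc t) s0 \<le> ?g t s0" using phiC C(2) by simp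
        define B' where "B' = bs @ s0 # rest"
        have "B' \<in> paths n" unfolding B'_def
          by (rule paths_append[OF bss(1) bsne bss(2) srt _ lastr]) (use ptt ts0 p_def in auto)
        then have "phi s B' \<le> M" using Mle by blast
        moreover have "phi s B' = phi s bs + ?g p s0 + phi s (s0 # rest)"
          unfolding B'_def using phi_append[OF bsne] p_def by simp
        moreover have "?g t s0 + ?g p (Suc t) \<le> ?g t (Suc t) + ?g p s0"
          by (rule four_point[OF i1 i2]) (use False in auto)
        ultimately show ?thesis using phiC phiC' phiB C(2) B(2) by simp
      qed
    qed
    then have "phi s C' = M" using Mle C'p by (simp add: order_antisym)
    then show ?thesis using C'p C'eq by blast
  qed
qed

lemma union_opt:
  assumes Mle: "\<forall>B\<in>paths n. phi s B \<le> M"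
    and ex: "\<exists>B\<in>paths n. phi s B = M"
    and cover: "\<And>k. 0 < k \<Longrightarrow> k < n \<Longrightarrow> \<exists>B\<in>paths n. phi s B = M \<and> k \<in> set B"
  shows "phi s [0..<Suc n] = M"
proof -
  have "\<forall>t. t \<le> n \<longrightarrow> (\<exists>C\<in>paths n. phi s C = M \<and> (\<exists>ys. C = [0..<Suc t] @ ys))"
  proof (intro allI)
    fix t show "t \<le> n \<longrightarrow> (\<exists>C\<in>paths n. phi s C = M \<and> (\<exists>ys. C = [0..<Suc t] @ ys))"
    proof (induction t)
      case 0
      obtain C where C: "C \<in> paths n" "phi s C = M" using ex by blast
      then have "C \<noteq> []" "hd C = 0" unfolding paths_def by auto
      then have "C = [0..<Suc 0] @ tl C" by (cases C) auto
      then show ?case using C by blast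
    next
      case (Suc t)
      show ?case
      proof
        assume tn: "Suc t \<le> n"
        then obtain C ys where "C \<in> paths n" "phi s C = M" "C = [0..<Suc t] @ ys" using Suc.IH by auto
        then show "\<exists>C\<in>paths n. phi s C = M \<and> (\<exists>ys. C = [0..<Suc (Suc t)] @ ys)"
          using union_step[OF Mle cover _ _ _ tn] by blast
      qed
    qed
  qed
  then obtain C ys where C: "C \<in> paths n" "phi s C = M" "C = [0..<Suc n] @ ys" by blast
  have "ys = []"
  proof (rule ccontr)
    assume ne: "ys \<noteq> []"
    have Cs: "sorted_wrt (<) C" "last C = n" using C(1) unfolding paths_def by auto
    have "last ys \<in> set ys" using ne by simp
    moreover have "n \<in> set [0..<Suc n]" by simp
    ultimately have "n < last ys" using Cs(1) C(3) by (auto simp: sorted_wrt_append)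
    moreover have "last C = last ys" using C(3) ne by simp
    ultimately show False using Cs(2) by simp
  qed
  then show ?thesis using C by simp
qed



definition S :: "(nat \<Rightarrow> real) \<Rightarrow> nat \<Rightarrow> real" where
  "S y j = sum y {..<j}"

lemma S_diff: "a \<le> b \<Longrightarrow> S y b - S y a = sum y {a..<b}"
  unfolding S_def using sum.atLeastLessThan_concat[of 0 a b y] by (simp add: atLeast0LessThan)

lemma S_Suc: "S y (Suc k) - S y k = y k"
  unfolding S_def by simp

lemma phi_upt_S: "a \<le> b \<Longrightarrow> phi (S y) [a..<Suc b] = (\<Sum>k\<in>{a..<b}. (y k)\<^sup>2)"
  using phi_upt[of a b "S y"] by (simp add: S_Suc)

fun ivs :: "nat list \<Rightarrow> nat set list" where
  "ivs (a # b # r) = {a..<b} # ivs (b # r)"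
| "ivs _ = []"

lemma ivs_props:
  "sorted_wrt (<) xs \<Longrightarrow> (\<forall>I\<in>set (ivs xs). nat_interval I \<and> I \<subseteq> {hd xs..}) \<and> distinct (ivs xs)
     \<and> pairwise disjnt (set (ivs xs))"
proof (induction xs rule: ivs.induct)
  case (1 a b r)
  have ab: "a < b" using "1.prems" by simp
  have IH: "(\<forall>I\<in>set (ivs (b # r)). nat_interval I \<and> I \<subseteq> {b..}) \<and> distinct (ivs (b # r))
     \<and> pairwise disjnt (set (ivs (b # r)))" using 1 by simp
  have nin: "{a..<b} \<notin> set (ivs (b # r))"
  proof
    assume "{a..<b} \<in> set (ivs (b # r))"
    then have "{a..<b} \<subseteq> {b..}" using IH by blast
    then show False using ab by auto
  qed
  have dj: "disjnt {a..<b} I" if "I \<in> set (ivs (b # r))" for I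
    using IH that unfolding disjnt_def by fastforce
  have pw: "pairwise disjnt (insert {a..<b} (set (ivs (b # r))))"
    using IH dj by (simp add: pairwise_insert disjnt_sym)
  have sub: "I \<subseteq> {a..}" if "I \<in> set (ivs (b # r))" for I
  proof -
    have "I \<subseteq> {b..}" using IH that by blast
    then show ?thesis using ab by auto
  qed
  then show ?case using IH ab nin pw nat_interval_atLeastLessThan[OF ab] by auto
qed auto

lemma phi_ivs: "sorted_wrt (<) xs \<Longrightarrow> summable x \<Longrightarrow> phi (S x) xs = sum_list (map (\<lambda>I. (isum x I)\<^sup>2) (ivs xs))"
proof (induction xs rule: ivs.induct)
  case (1 a b r)
  have ab: "a < b" using "1.prems" by simp
  have "isum x {a..<b} = sum x {a..<b}" by (simp add: isum_def)
  also have "\<dots> = S x b - S x a" using S_diff ab by simp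
  finally show ?case using 1 by simp
qed auto

lemma phi_le_J:
  assumes "inJ x" "sorted_wrt (<) xs"
  shows "phi (S x) xs \<le> (J_norm x)\<^sup>2"
proof -
  have sx: "summable x" using assms(1) unfolding inJ_def by simp
  have P: "(\<forall>I\<in>set (ivs xs). nat_interval I \<and> I \<subseteq> {hd xs..}) \<and> distinct (ivs xs)
     \<and> pairwise disjnt (set (ivs xs))" by (rule ivs_props[OF assms(2)])
  have "phi (S x) xs = (\<Sum>I\<in>set (ivs xs). (isum x I)\<^sup>2)"
    using phi_ivs[OF assms(2) sx] P sum_list_distinct_conv_sum_set by metis
  also have "\<dots> \<le> (J_norm x)\<^sup>2" using P by (intro J_fam_le[OF assms(1)]) auto
  finally show ?thesis .
qed

lemma fin_good:
  assumes supp: "\<And>k. k \<ge> n \<Longrightarrow> y k = 0" and le: "\<forall>xs\<in>paths n. phi (S y) xs \<le> 1"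
    and fin: "phi (S y) [0..<Suc n] = 1"
  shows "inJ y \<and> NPR_hered y \<and> l2_norm_seq y = 1"
proof -
  have tot: "(\<Sum>k<n. (y k)\<^sup>2) = 1" using fin phi_upt_S[of 0 n y] by (simp add: atLeast0LessThan)
  have l2: "l2_norm_seq y = 1"
  proof -
    have "(\<Sum>j. (y j)\<^sup>2) = (\<Sum>k<n. (y k)\<^sup>2)" by (rule suminf_finite) (auto simp: supp)
    then show ?thesis unfolding l2_norm_seq_def using tot by simp
  qed
  have npr: "NPR (restr y I)" if I: "nat_interval I" for I
  proof -
    define A where "A = I \<inter> {..<n}"
    have z: "\<And>k. k \<notin> A \<Longrightarrow> restr y I k = 0" unfolding A_def restr_def using supp by auto
    have e1: "suminf (restr y I) = sum y A"
      using suminf_finite[of A "restr y I"] z unfolding A_def by (simp add: restr_def)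
    have e2: "(\<Sum>k. \<bar>restr y I k\<bar>\<^sup>2) = (\<Sum>k\<in>A. (y k)\<^sup>2)"
      using suminf_finite[of A "\<lambda>k. \<bar>restr y I k\<bar>\<^sup>2"] z unfolding A_def by (simp add: restr_def)
    have "(sum y A)\<^sup>2 \<le> (\<Sum>k\<in>A. (y k)\<^sup>2)"
    proof (cases "A = {}")
      case True then show ?thesis by simp
    next
      case False
      have A': "A = I \<inter> {0..<n}" unfolding A_def by auto
      have niA: "nat_interval A" using nat_interval_Int_ivl[OF I, of 0 n] False A' by simp
      have fA: "finite A" unfolding A_def by simp
      define a where "a = Min A"
      define b where "b = Suc (Max A)"
      have Aab: "A = {a..<b}" using nat_interval_fin[OF niA fA] unfolding a_def b_def atLeastLessThanSuc_atLeastAtMost by simp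
      have ab: "a < b" using Aab False by auto
      have bn: "b \<le> n" using Max_in[OF fA False] unfolding b_def A_def by auto
      define xs where "xs = [0..<Suc a] @ [b..<Suc n]"
      have pre: "sorted_wrt (<) [0..<Suc a]" "[0..<Suc a] \<noteq> []" "hd [0..<Suc a] = 0" "last [0..<Suc a] = a"
        by (auto simp: sorted_wrt_upt hd_upt simp del: upt_Suc)
      have suf: "[b..<Suc n] = b # [Suc b..<Suc n]" using bn by (simp add: upt_rec)
      have "xs \<in> paths n" unfolding xs_def
        by (rule paths_append[OF pre(1-3)]) (use bn ab pre(4) in \<open>auto simp: sorted_wrt_upt hd_upt simp del: upt_Suc\<close>)
      then have "phi (S y) xs \<le> 1" using le by blast
      moreover have "phi (S y) xs = phi (S y) [0..<Suc a] + (S y b - S y a)\<^sup>2 + phi (S y) [b..<Suc n]"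
        unfolding xs_def using phi_append[OF pre(2), of "S y" b "[Suc b..<Suc n]"] suf pre(4) by simp
      moreover have "phi (S y) [0..<Suc a] = (\<Sum>k\<in>{0..<a}. (y k)\<^sup>2)" by (rule phi_upt_S) simp
      moreover have "phi (S y) [b..<Suc n] = (\<Sum>k\<in>{b..<n}. (y k)\<^sup>2)" by (rule phi_upt_S[OF bn])
      moreover have "S y b - S y a = sum y {a..<b}" using S_diff ab by simp
      moreover have "(\<Sum>k<n. (y k)\<^sup>2) = (\<Sum>k\<in>{0..<a}. (y k)\<^sup>2) + (\<Sum>k\<in>{a..<b}. (y k)\<^sup>2) + (\<Sum>k\<in>{b..<n}. (y k)\<^sup>2)"
        using sum.atLeastLessThan_concat[of 0 a b "\<lambda>k. (y k)\<^sup>2"] sum.atLeastLessThan_concat[of 0 b n "\<lambda>k. (y k)\<^sup>2"] ab bn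
        by (simp add: atLeast0LessThan)
      ultimately show ?thesis using tot Aab by simp
    qed
    then show ?thesis unfolding NPR_def using e1 e2 by simp
  qed
  have "inJ y" by (rule inJ_finsupp[of n]) (rule supp)
  then show ?thesis using l2 npr unfolding NPR_hered_def by blast
qed



lemma S_lin: "S (\<lambda>j. y j + t * d j) = (\<lambda>k. S y k + t * S d k)"
  unfolding S_def by (auto simp: sum.distrib sum_distrib_left)

lemma phi_cont: "continuous_on A (\<lambda>t. phi (\<lambda>j. a j + t * b j) xs)"
  by (induction xs rule: ivs.induct) (auto intro!: continuous_intros)

lemma direction:
  assumes n1: "1 \<le> n" and le: "\<forall>xs\<in>paths n. phi (S y) xs \<le> 1" and nf: "phi (S y) [0..<Suc n] \<noteq> 1"
  shows "\<exists>d. (\<forall>k\<ge>n. d k = 0) \<and> (\<exists>k<n. d k \<noteq> 0) \<and>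
           (\<forall>xs\<in>paths n. phi (S y) xs = 1 \<longrightarrow> (\<forall>j\<in>set xs. S d j = 0))"
proof (cases "\<exists>B\<in>paths n. phi (S y) B = 1")
  case False
  define d where "d (j::nat) = (if j = 0 then 1 else (0::real))" for j
  have "\<forall>k\<ge>n. d k = 0" using n1 unfolding d_def by auto
  moreover have "\<exists>k<n. d k \<noteq> 0" using n1 unfolding d_def by (intro exI[of _ 0]) auto
  ultimately show ?thesis using False by blast
next
  case True
  have "\<not> (\<forall>k. 0 < k \<longrightarrow> k < n \<longrightarrow> (\<exists>B\<in>paths n. phi (S y) B = 1 \<and> k \<in> set B))"
  proof
    assume c: "\<forall>k. 0 < k \<longrightarrow> k < n \<longrightarrow> (\<exists>B\<in>paths n. phi (S y) B = 1 \<and> k \<in> set B)"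
    have "phi (S y) [0..<Suc n] = 1" by (rule union_opt[OF le True]) (use c in blast)
    then show False using nf by simp
  qed
  then obtain k where k: "0 < k" "k < n" "\<forall>B\<in>paths n. phi (S y) B = 1 \<longrightarrow> k \<notin> set B" by blast
  define d where "d j = (if j = k - 1 then 1 else (0::real)) - (if j = k then 1 else 0)" for j
  have Sd: "S d j = (if k - 1 < j then 1 else 0) - (if k < j then 1 else 0)" for j
    unfolding S_def d_def by (simp add: sum_subtractf)
  have Sd0: "S d j = 0" if "j \<noteq> k" for j using that k(1) unfolding Sd by auto
  have "\<forall>j\<ge>n. d j = 0" using k unfolding d_def by auto
  moreover have "d (k - 1) \<noteq> 0" using k(1) unfolding d_def by auto
  then have "\<exists>j<n. d j \<noteq> 0" using k(2) by (intro exI[of _ "k - 1"]) auto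
  moreover have "\<forall>xs\<in>paths n. phi (S y) xs = 1 \<longrightarrow> (\<forall>j\<in>set xs. S d j = 0)"
    using k(3) Sd0 by metis
  ultimately show ?thesis by blast
qed

lemma fin_main:
  fixes f :: "(nat \<Rightarrow> real) \<Rightarrow> real"
  assumes lin: "\<forall>x y a b. inJ x \<longrightarrow> inJ y \<longrightarrow> f (\<lambda>n. a * x n + b * y n) = a * f x + b * f y"
    and good: "\<And>y. inJ y \<Longrightarrow> NPR_hered y \<Longrightarrow> l2_norm_seq y = 1 \<Longrightarrow> f y \<le> sig"
    and n1: "1 \<le> n"
  shows "(\<And>k. k \<ge> n \<Longrightarrow> y k = 0) \<Longrightarrow> \<forall>xs\<in>paths n. phi (S y) xs \<le> 1 \<Longrightarrow> f y \<le> sig"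
proof (induction "card {xs\<in>paths n. phi (S y) xs < 1}" arbitrary: y rule: less_induct)
  case less
  note supp = less.prems(1) and le = less.prems(2)
  show ?case
  proof (cases "phi (S y) [0..<Suc n] = 1")
    case True
    then show ?thesis using fin_good[OF supp le True] good by blast
  next
    case False
    obtain d where d: "\<forall>k\<ge>n. d k = 0" "\<exists>k<n. d k \<noteq> 0"
      "\<forall>xs\<in>paths n. phi (S y) xs = 1 \<longrightarrow> (\<forall>j\<in>set xs. S d j = 0)"
      using direction[OF n1 le False] by blast
    have inJd: "inJ d" by (rule inJ_finsupp[of n]) (use d(1) in auto)
    have inJy: "inJ y" by (rule inJ_finsupp[of n]) (use supp in auto)
    define c where "c = (if 0 \<le> f d then 1 else - 1::real)"
    define e where "e j = c * d j" for j
    have c0: "c \<noteq> 0" unfolding c_def by simp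
    have "f (\<lambda>j. c * d j + 0 * d j) = c * f d + 0 * f d" using lin inJd by blast
    then have fe: "0 \<le> f e" unfolding e_def c_def by auto
    have inJe: "inJ e" by (rule inJ_finsupp[of n]) (use d(1) in \<open>auto simp: e_def\<close>)
    have esupp: "\<forall>k\<ge>n. e k = 0" using d(1) unfolding e_def by simp
    obtain k0 where k0: "k0 < n" "e k0 \<noteq> 0" using d(2) c0 unfolding e_def by auto
    have Se: "S e j = c * S d j" for j unfolding S_def e_def by (simp add: sum_distrib_left)
    define ph where "ph xs t = phi (\<lambda>j. S y j + t * S e j) xs" for xs t
    have ph_eq: "phi (S (\<lambda>j. y j + t * e j)) xs = ph xs t" for xs t unfolding ph_def S_lin ..
    have ph0: "ph xs 0 = phi (S y) xs" for xs unfolding ph_def by simp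
    have phc: "continuous_on A (ph xs)" for A xs unfolding ph_def by (rule phi_cont)
    have act: "ph xs t = 1" if "xs \<in> paths n" "phi (S y) xs = 1" for xs t
    proof -
      have "\<forall>j\<in>set xs. S e j = 0" using d(3) that Se by simp
      then have "ph xs t = phi (S y) xs" unfolding ph_def by (intro phi_cong) auto
      then show ?thesis using that by simp
    qed
    define In where "In = {xs\<in>paths n. phi (S y) xs < 1}"
    have fIn: "finite In" unfolding In_def using finite_paths by simp
    define Z where "Z = (\<Union>xs\<in>In. {t. 0 \<le> t \<and> 1 \<le> ph xs t})"
    have clZ: "closed Z" unfolding Z_def
      by (intro closed_UN fIn ballI closed_Collect_conj closed_Collect_le continuous_intros phc)
    have finIn: "[0..<Suc n] \<in> In" using le upt_paths False unfolding In_def by force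
    have phfin: "ph [0..<Suc n] t = (\<Sum>k\<in>{0..<n}. (y k + t * e k)\<^sup>2)" for t
      using phi_upt_S[of 0 n "\<lambda>j. y j + t * e j"] ph_eq by simp
    define t0 where "t0 = (\<bar>y k0\<bar> + 1) / \<bar>e k0\<bar>"
    have "1 \<le> \<bar>y k0 + t0 * e k0\<bar>"
    proof -
      have "t0 * \<bar>e k0\<bar> = \<bar>y k0\<bar> + 1" unfolding t0_def using k0(2) by simp
      moreover have "\<bar>t0 * e k0\<bar> = t0 * \<bar>e k0\<bar>" unfolding t0_def by (simp add: abs_mult)
      ultimately show ?thesis by linarith
    qed
    then have "1 \<le> (y k0 + t0 * e k0)\<^sup>2" by (metis abs_ge_zero one_le_power power2_abs)
    also have "\<dots> \<le> (\<Sum>k\<in>{0..<n}. (y k + t0 * e k)\<^sup>2)"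
      by (rule member_le_sum) (use k0 in auto)
    finally have "1 \<le> ph [0..<Suc n] t0" using phfin by simp
    moreover have "0 \<le> t0" unfolding t0_def by simp
    ultimately have t0Z: "t0 \<in> Z" unfolding Z_def using finIn by blast
    have bZ: "bdd_below Z" unfolding Z_def bdd_below_def by auto
    define ts where "ts = Inf Z"
    have tsZ: "ts \<in> Z" unfolding ts_def by (rule closed_contains_Inf) (use t0Z bZ clZ in auto)
    then obtain xs0 where xs0: "xs0 \<in> In" "0 \<le> ts" "1 \<le> ph xs0 ts" unfolding Z_def by blast
    have allle: "ph xs ts \<le> 1" if xs: "xs \<in> paths n" for xs
    proof (cases "phi (S y) xs = 1")
      case True then show ?thesis using act xs by simp
    next
      case False
      then have lt: "phi (S y) xs < 1" using le xs by force
      show ?thesis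
      proof (rule ccontr)
        assume "\<not> ph xs ts \<le> 1"
        then have gt: "1 < ph xs ts" by simp
        obtain t where t: "0 \<le> t" "t \<le> ts" "ph xs t = 1"
          using IVT'[of "ph xs" 0 1 ts] ph0 lt gt xs0(2) phc by fastforce
        have "t \<in> Z" unfolding Z_def In_def using t xs lt by auto
        then have "ts \<le> t" unfolding ts_def using bZ by (rule cInf_lower)
        then show False using t gt by simp
      qed
    qed
    define z where "z j = y j + ts * e j" for j
    have zS: "phi (S z) xs = ph xs ts" for xs unfolding z_def using ph_eq by simp
    have zsupp: "\<And>k. k \<ge> n \<Longrightarrow> z k = 0" unfolding z_def using supp esupp by simp
    have zle: "\<forall>xs\<in>paths n. phi (S z) xs \<le> 1" using allle zS by simp
    have sub: "{xs\<in>paths n. phi (S z) xs < 1} \<subseteq> In - {xs0}"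
    proof
      fix xs assume "xs \<in> {xs\<in>paths n. phi (S z) xs < 1}"
      then have xs: "xs \<in> paths n" "ph xs ts < 1" using zS by auto
      then have "phi (S y) xs \<noteq> 1" using act by force
      then have "phi (S y) xs < 1" using le xs(1) by force
      moreover have "xs \<noteq> xs0" using xs(2) xs0(3) by auto
      ultimately show "xs \<in> In - {xs0}" unfolding In_def using xs(1) by auto
    qed
    have "card {xs\<in>paths n. phi (S z) xs < 1} \<le> card (In - {xs0})"
      by (rule card_mono) (use fIn sub in auto)
    also have "\<dots> < card In" by (rule card_Diff1_less[OF fIn xs0(1)])
    finally have cl: "card {xs\<in>paths n. phi (S z) xs < 1} < card {xs\<in>paths n. phi (S y) xs < 1}"
      unfolding In_def .
    have fz: "f z \<le> sig" by (rule less.hyps[OF cl zsupp zle])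
    have "f (\<lambda>j. 1 * y j + ts * e j) = 1 * f y + ts * f e" using lin inJy inJe by blast
    then have "f z = f y + ts * f e" unfolding z_def by simp
    moreover have "0 \<le> ts * f e" using xs0(2) fe by simp
    ultimately show ?thesis using fz by simp
  qed
qed



lemma phi_neg: "phi (\<lambda>j. - s j) xs = phi s xs"
  by (induction xs rule: ivs.induct) (auto simp: power2_commute)

lemma e0_good:
  defines "e0 \<equiv> (\<lambda>j::nat. if j = 0 then 1 else (0::real))"
  shows "inJ e0 \<and> NPR_hered e0 \<and> l2_norm_seq e0 = 1"
proof -
  have inJ: "inJ e0" by (rule inJ_finsupp[of 1]) (auto simp: e0_def)
  have l2: "l2_norm_seq e0 = 1"
  proof -
    have "(\<Sum>j. (e0 j)\<^sup>2) = (\<Sum>j\<in>{0}. (e0 j)\<^sup>2)" by (rule suminf_finite) (auto simp: e0_def)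
    then show ?thesis unfolding l2_norm_seq_def by (simp add: e0_def)
  qed
  have "NPR (restr e0 I)" for I
  proof -
    have a: "suminf (restr e0 I) = sum (restr e0 I) {0}" by (rule suminf_finite) (auto simp: e0_def restr_def)
    have b: "(\<Sum>j. \<bar>restr e0 I j\<bar>\<^sup>2) = (\<Sum>j\<in>{0}. \<bar>restr e0 I j\<bar>\<^sup>2)"
      by (rule suminf_finite) (auto simp: e0_def restr_def)
    show ?thesis unfolding NPR_def a b by (simp add: e0_def restr_def)
  qed
  then show ?thesis using inJ l2 unfolding NPR_hered_def by blast
qed

theorem corollary3p20:
  fixes f :: "(nat \<Rightarrow> real) \<Rightarrow> real"
  assumes "inJdual f"
  shows "dual_norm f = Sup {f x | x. inJ x \<and> NPR_hered x \<and> l2_norm_seq x = 1}"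
proof -
  have lin: "\<forall>x y a b. inJ x \<longrightarrow> inJ y \<longrightarrow> f (\<lambda>n. a * x n + b * y n) = a * f x + b * f y"
    using assms unfolding inJdual_def by blast
  obtain C where C: "\<forall>x. inJ x \<longrightarrow> \<bar>f x\<bar> \<le> C * J_norm x" using assms unfolding inJdual_def by blast
  define C' where "C' = \<bar>C\<bar>"
  have C'0: "0 \<le> C'" unfolding C'_def by simp
  have bnd: "\<bar>f x\<bar> \<le> C' * J_norm x" if "inJ x" for x
  proof -
    have "C * J_norm x \<le> C' * J_norm x" unfolding C'_def using J_norm_nonneg[OF that]
      by (intro mult_right_mono) auto
    then show ?thesis using C that by force
  qed
  define R where "R = {f x | x. inJ x \<and> NPR_hered x \<and> l2_norm_seq x = 1}"
  define D where "D = {\<bar>f x\<bar> | x. inJ x \<and> J_norm x \<le> 1}"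
  have Rne: "R \<noteq> {}" unfolding R_def using e0_good by blast
  have Rbdd: "bdd_above R"
  proof -
    have "v \<le> C'" if "v \<in> R" for v
    proof -
      obtain x where x: "v = f x" "inJ x" "NPR_hered x" "l2_norm_seq x = 1" using \<open>v \<in> R\<close> unfolding R_def by blast
      have "J_norm x \<le> 1" using J_le_l2[OF x(2,3)] x(4) by simp
      then have "C' * J_norm x \<le> C'" using C'0 by (simp add: mult_left_le)
      then show ?thesis using bnd[OF x(2)] x(1) by simp
    qed
    then show ?thesis unfolding bdd_above_def by blast
  qed
  have Dne: "D \<noteq> {}"
  proof -
    have i0: "inJ (\<lambda>_. 0)" by (rule inJ_finsupp[of 0]) simp
    have "J_norm (\<lambda>_. 0) \<le> 1"
    proof (rule J_norm_le)
      fix v assume "v \<in> J_vals (\<lambda>_. 0)"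
      then obtain F where "v = sqrt (\<Sum>I\<in>F. (isum (\<lambda>_. 0) I)\<^sup>2)" "\<forall>I\<in>F. nat_interval I" unfolding J_vals_def by blast
      moreover have "isum (\<lambda>_. 0) I = 0" if "nat_interval I" for I using isum_finsupp[of 0 "\<lambda>_. 0" I] that by simp
      ultimately show "v \<le> 1" by simp
    qed
    then show ?thesis unfolding D_def using i0 by blast
  qed
  have Dbdd: "bdd_above D"
  proof -
    have "v \<le> C'" if "v \<in> D" for v
    proof -
      obtain x where x: "v = \<bar>f x\<bar>" "inJ x" "J_norm x \<le> 1" using \<open>v \<in> D\<close> unfolding D_def by blast
      have "C' * J_norm x \<le> C'" using C'0 x(3) by (simp add: mult_left_le)
      then show ?thesis using bnd[OF x(2)] x(1) by simp
    qed
    then show ?thesis unfolding bdd_above_def by blast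
  qed
  have good: "f y \<le> Sup R" if "inJ y" "NPR_hered y" "l2_norm_seq y = 1" for y
    by (rule cSup_upper[OF _ Rbdd]) (use that in \<open>auto simp: R_def\<close>)
  have ge: "Sup R \<le> Sup D"
  proof (rule cSup_least[OF Rne])
    fix v assume "v \<in> R"
    then obtain x where x: "v = f x" "inJ x" "NPR_hered x" "l2_norm_seq x = 1" unfolding R_def by blast
    have "J_norm x \<le> 1" using J_le_l2[OF x(2,3)] x(4) by simp
    then have "\<bar>f x\<bar> \<in> D" unfolding D_def using x(2) by blast
    then have "\<bar>f x\<bar> \<le> Sup D" by (rule cSup_upper[OF _ Dbdd])
    then show "v \<le> Sup D" using x(1) by simp
  qed
  have le: "Sup D \<le> Sup R"
  proof (rule cSup_least[OF Dne])
    fix v assume "v \<in> D"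
    then obtain x where x: "v = \<bar>f x\<bar>" "inJ x" "J_norm x \<le> 1" unfolding D_def by blast
    have J2: "(J_norm x)\<^sup>2 \<le> 1" using x(3) J_norm_nonneg[OF x(2)] by (simp add: power_le_one)
    have sx: "summable x" using x(2) unfolding inJ_def by simp
    have eps: "\<bar>f x\<bar> \<le> Sup R + C' * e" if e: "0 < e" for e
    proof -
      obtain N where N: "N \<ge> 1" "J_norm (restr x {N..}) < e" using tail_small[OF x(2) e] by blast
      define xN where "xN = restr x {..<N}"
      have xNs: "\<And>k. k \<ge> N \<Longrightarrow> xN k = 0" unfolding xN_def restr_def by simp
      have inJN: "inJ xN" by (rule inJ_finsupp[of N]) (use xNs in auto)
      have phN: "phi (S xN) xs \<le> 1" if xs: "xs \<in> paths N" for xs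
      proof -
        have xss: "sorted_wrt (<) xs" "last xs = N" using xs unfolding paths_def by auto
        have "phi (S xN) xs = phi (S x) xs"
        proof (rule phi_cong)
          fix j assume "j \<in> set xs"
          then have "j \<le> N" using sorted_le_last[OF xss(1)] xss(2) by force
          then show "S xN j = S x j" unfolding S_def xN_def restr_def by (intro sum.cong) auto
        qed
        also have "\<dots> \<le> (J_norm x)\<^sup>2" by (rule phi_le_J[OF x(2) xss(1)])
        finally show ?thesis using J2 by simp
      qed
      have f1: "f xN \<le> Sup R"
        by (rule fin_main[OF lin good N(1) xNs]) (use phN in auto)
      define mN where "mN j = - xN j" for j
      have SmN: "S mN = (\<lambda>j. - S xN j)" unfolding S_def mN_def by (auto simp: sum_negf)
      have f2: "f mN \<le> Sup R"
      proof (rule fin_main[OF lin good N(1)])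
        show "\<And>k. N \<le> k \<Longrightarrow> mN k = 0" using xNs unfolding mN_def by simp
        show "\<forall>xs\<in>paths N. phi (S mN) xs \<le> 1" using phN unfolding SmN phi_neg by blast
      qed
      have "f (\<lambda>n. (-1) * xN n + 0 * xN n) = (-1) * f xN + 0 * f xN" using lin inJN by blast
      then have "f mN = - f xN" unfolding mN_def by simp
      then have fN: "\<bar>f xN\<bar> \<le> Sup R" using f1 f2 by simp
      define r where "r n = x n - xN n" for n
      have rr: "r = restr x {N..}" unfolding r_def xN_def restr_def by auto
      have inJr: "inJ r" using inJ_diff[OF x(2) inJN] unfolding r_def by simp
      have fr: "\<bar>f r\<bar> \<le> C' * e"
      proof -
        have "\<bar>f r\<bar> \<le> C' * J_norm r" by (rule bnd[OF inJr])
        also have "\<dots> \<le> C' * e" using N(2) rr C'0 by (simp add: mult_left_mono)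
        finally show ?thesis .
      qed
      have "f (\<lambda>n. 1 * xN n + 1 * r n) = 1 * f xN + 1 * f r" using lin inJN inJr by blast
      then have "f x = f xN + f r" unfolding r_def by simp
      then show ?thesis using fN fr by simp
    qed
    have "\<bar>f x\<bar> \<le> Sup R"
    proof (rule field_le_epsilon)
      fix e :: real assume e: "0 < e"
      have "\<bar>f x\<bar> \<le> Sup R + C' * (e / (C' + 1))" using eps[of "e / (C' + 1)"] e C'0 by simp
      also have "C' * (e / (C' + 1)) \<le> e"
        using e C'0 by (simp add: field_simps)
      finally show "\<bar>f x\<bar> \<le> Sup R + e" by simp
    qed
    then show "v \<le> Sup R" using x(1) by simp
  qed
  show ?thesis unfolding dual_norm_def using ge le unfolding R_def D_def by simp
qed


end
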